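(* Let $G=D_\infty=\langle s\rangle\rtimes\langle t\rangle$ and let $\alpha,\beta:\mathbb{Z}\curvearrowright X_0$ be two minimal topologically free continuous actions on a compact Hausdorff space $X_0$. Let $\widetilde\alpha,\widetilde\beta:G\curvearrowright X:=G/\mathbb{Z}\times X_0$ be the associated induced actions (with $\mathbb{Z}=\langle s\rangle$ and lift $L(\mathbb{Z})=e$, $L(t\mathbb{Z})=t$). Then: (1) if $\widetilde\alpha$ and $\widetilde\beta$ are continuously orbit equivalent via the identity homeomorphism of $X$ (i.e. there are continuous $c,c':G\times X\to G$ with $\widetilde\alpha_g(\tilde x)=\widetilde\beta_{c(g,\tilde x)}(\tilde x)$ and $\widetilde\beta_g(\tilde x)=\widetilde\alpha_{c'(g,\tilde x)}(\tilde x)$), then $\alpha$ and $\beta$ are continuously orbit equivalent; (2) if $\alpha$ and $\beta$ are continuously orbit equivalent, then $\widetilde\alpha$ and $\widetilde\beta$ are conjugate.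
   Context: Induced action: with $\delta:G\times G/\mathbb{Z}\to\mathbb{Z}$, $\delta(g,g'\mathbb{Z})=L(gg'\mathbb{Z})^{-1}gL(g'\mathbb{Z})$, set $\widetilde\alpha_g(g'\mathbb{Z},x)=(gg'\mathbb{Z},\ \alpha_{\delta(g,g'\mathbb{Z})}(x))$, and similarly for $\beta$. Continuous orbit equivalence of two actions $\gamma,\gamma'$ of a group $\Gamma$ on a space $Z$: a homeomorphism $\phi:Z\to Z$ with inverse $\psi$ and continuous $a,b:\Gamma\times Z\to\Gamma$ with $\phi(\gamma_g z)=\gamma'_{a(g,z)}\phi(z)$ and $\psi(\gamma'_h z)=\gamma_{b(h,z)}\psi(z)$. Conjugacy: a homeomorphism $\phi$ and an automorphism $\tau$ of $\Gamma$ with $\phi(\gamma_g z)=\gamma'_{\tau(g)}\phi(z)$ for all $g,z$. *)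

theory Defs
  imports "HOL-Analysis.Analysis"
begin

text \<open>An element (n, e) of type int * bool represents s^n t^e in
  D_inf = <s> semidirect <t>, with t s t^-1 = s^-1 and t^2 = 1.\<close>

type_synonym dinf = "int \<times> bool"

definition dmult :: "dinf \<Rightarrow> dinf \<Rightarrow> dinf" where
  "dmult g h = (fst g + (if snd g then - fst h else fst h), snd g \<noteq> snd h)"

definition dinv :: "dinf \<Rightarrow> dinf" where
  "dinv g = ((if snd g then fst g else - fst g), snd g)"

text \<open>The left coset g Z (Z = <s>) is determined by the t-exponent;
  G/Z is represented by bool (False = Z, True = tZ).\<close>

definition dcoset :: "dinf \<Rightarrow> bool" where
  "dcoset g = snd g"

definition dlift :: "bool \<Rightarrow> dinf" where
  "dlift c = (0, c)"

text \<open>The cocycle delta(g, g'Z) = L(g g'Z)^-1 g L(g'Z), an element of Z = <s>,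
  recorded by its exponent of s.\<close>

definition dcocycle :: "dinf \<Rightarrow> bool \<Rightarrow> int" where
  "dcocycle g c = fst (dmult (dinv (dlift (dcoset (dmult g (dlift c))))) (dmult g (dlift c)))"

definition induced_action :: "(int \<Rightarrow> 'a \<Rightarrow> 'a) \<Rightarrow> dinf \<Rightarrow> bool \<times> 'a \<Rightarrow> bool \<times> 'a" where
  "induced_action \<alpha> g y = (dcoset (dmult g (dlift (fst y))), \<alpha> (dcocycle g (fst y)) (snd y))"

definition Xtop :: "(bool \<times> 'a::topological_space) topology" where
  "Xtop = prod_topology (discrete_topology UNIV) euclidean"

definition int_action :: "(int \<Rightarrow> 'a::topological_space \<Rightarrow> 'a) \<Rightarrow> bool" where
  "int_action \<alpha> \<longleftrightarrow> \<alpha> 0 = id \<and> (\<forall>m n. \<alpha> (m + n) = \<alpha> m \<circ> \<alpha> n)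
     \<and> continuous_map (prod_topology (discrete_topology UNIV) euclidean) euclidean
         (\<lambda>(n, x). \<alpha> n x)"

definition minimal_action :: "(int \<Rightarrow> 'a::topological_space \<Rightarrow> 'a) \<Rightarrow> bool" where
  "minimal_action \<alpha> \<longleftrightarrow> (\<forall>x. closure (range (\<lambda>n. \<alpha> n x)) = UNIV)"

definition topologically_free :: "(int \<Rightarrow> 'a::topological_space \<Rightarrow> 'a) \<Rightarrow> bool" where
  "topologically_free \<alpha> \<longleftrightarrow> (\<forall>n. n \<noteq> 0 \<longrightarrow> interior {x. \<alpha> n x = x} = {})"

definition cont_orbit_equiv ::
  "'z topology \<Rightarrow> ('g \<Rightarrow> 'z \<Rightarrow> 'z) \<Rightarrow> ('g \<Rightarrow> 'z \<Rightarrow> 'z) \<Rightarrow> bool" where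
  "cont_orbit_equiv T \<gamma> \<gamma>' \<longleftrightarrow>
    (\<exists>\<phi> \<psi> a b. homeomorphic_maps T T \<phi> \<psi>
      \<and> continuous_map (prod_topology (discrete_topology UNIV) T) (discrete_topology UNIV) (\<lambda>(g, z). a g z)
      \<and> continuous_map (prod_topology (discrete_topology UNIV) T) (discrete_topology UNIV) (\<lambda>(h, z). b h z)
      \<and> (\<forall>g z. z \<in> topspace T \<longrightarrow> \<phi> (\<gamma> g z) = \<gamma>' (a g z) (\<phi> z))
      \<and> (\<forall>h z. z \<in> topspace T \<longrightarrow> \<psi> (\<gamma>' h z) = \<gamma> (b h z) (\<psi> z)))"

definition conjugate_actions ::
  "('g \<Rightarrow> 'g \<Rightarrow> 'g) \<Rightarrow> 'z topology \<Rightarrow> ('g \<Rightarrow> 'z \<Rightarrow> 'z) \<Rightarrow> ('g \<Rightarrow> 'z \<Rightarrow> 'z) \<Rightarrow> bool" where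
  "conjugate_actions gmult T \<gamma> \<gamma>' \<longleftrightarrow>
    (\<exists>\<phi> \<tau>. homeomorphic_map T T \<phi>
      \<and> bij \<tau> \<and> (\<forall>g h. \<tau> (gmult g h) = gmult (\<tau> g) (\<tau> h))
      \<and> (\<forall>g z. z \<in> topspace T \<longrightarrow> \<phi> (\<gamma> g z) = \<gamma>' (\<tau> g) (\<phi> z)))"

end

theory Submission
  imports Defs
begin

lemma disc_open:
  assumes "continuous_map euclidean (discrete_topology UNIV) f"
  shows "open {x. f x = v}"
  using openin_continuous_map_preimage[OF assms, of "{v}"] by simp

lemma disc_closed:
  assumes "continuous_map euclidean (discrete_topology UNIV) f"
  shows "closed {x. P (f x)}"
  using closedin_continuous_map_preimage[OF assms, of "{v. P v}"] by simp

lemma disc_open2: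
  assumes "continuous_map euclidean (discrete_topology UNIV) f"
  shows "open {x. P (f x)}"
  using openin_continuous_map_preimage[OF assms, of "{v. P v}"] by simp

lemma cont_of_lc:
  assumes "\<And>x0. \<exists>U. open U \<and> x0 \<in> U \<and> (\<forall>x\<in>U. f x = f x0)"
  shows "continuous_map euclidean (discrete_topology UNIV) f"
proof -
  have "open {x. f x \<in> W}" for W
  proof (rule Topological_Spaces.openI)
    fix x assume x: "x \<in> {x. f x \<in> W}"
    from assms[of x] obtain U where U: "open U" "x \<in> U" "\<forall>y\<in>U. f y = f x" by blast
    have "U \<subseteq> {x. f x \<in> W}" using U(3) x by auto
    then show "\<exists>T. open T \<and> x \<in> T \<and> T \<subseteq> {x. f x \<in> W}" using U(1,2) by blast
  qed
  then show ?thesis unfolding continuous_map_def by simp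
qed


lemma bounded_disc:
  fixes f :: "'a::topological_space \<Rightarrow> int"
  assumes "compact (UNIV::'a set)" "continuous_map euclidean (discrete_topology UNIV) f"
  shows "\<exists>K. \<forall>x. \<bar>f x\<bar> \<le> K"
proof -
  have "compactin (discrete_topology UNIV) (f ` UNIV)"
    using image_compactin[OF _ assms(2), of UNIV] assms(1) by simp
  then have fin: "finite (range f)" by (simp add: compactin_discrete_topology)
  have "\<forall>x. \<bar>f x\<bar> \<le> Max (abs ` range f)"
    using fin by (intro allI Max_ge) auto
  then show ?thesis by blast
qed

lemma cont_section:
  assumes "continuous_map (prod_topology (discrete_topology UNIV) euclidean) Y (\<lambda>(g, z). a g z)"
  shows "continuous_map euclidean Y (a g)"
proof -
  have "continuous_map euclidean (prod_topology (discrete_topology UNIV) euclidean) (\<lambda>z. (g, z))"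
    by (intro continuous_map_pairedI) auto
  from continuous_map_compose[OF this assms] show ?thesis by (simp add: o_def)
qed

lemma free_of:
  fixes \<alpha> :: "int \<Rightarrow> 'a::t2_space \<Rightarrow> 'a"
  assumes "int_action \<alpha>" "minimal_action \<alpha>" "topologically_free \<alpha>" "\<alpha> n x = x"
  shows "n = 0"
proof (rule ccontr)
  assume n: "n \<noteq> 0"
  have comp: "\<And>m k. \<alpha> (m + k) y = \<alpha> m (\<alpha> k y)" for y using assms(1) by (simp add: int_action_def)
  have cont: "continuous_on UNIV (\<alpha> n)"
    using cont_section[where a=\<alpha> and Y=euclidean and g=n] assms(1) by (simp add: int_action_def case_prod_unfold)
  have cl: "closed {y. \<alpha> n y = id y}"
    by (rule closed_Collect_eq[OF cont]) (simp add: continuous_on_id)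
  have "range (\<lambda>k. \<alpha> k x) \<subseteq> {y. \<alpha> n y = id y}"
  proof clarsimp
    fix k
    have "\<alpha> n (\<alpha> k x) = \<alpha> (k + n) x" using comp[of n k x] by (simp add: add.commute)
    also have "\<dots> = \<alpha> k x" using comp[of k n x] assms(4) by simp
    finally show "\<alpha> n (\<alpha> k x) = \<alpha> k x" .
  qed
  then have "closure (range (\<lambda>k. \<alpha> k x)) \<subseteq> {y. \<alpha> n y = y}"
    using closure_minimal[OF _ cl] by simp
  then have "{y. \<alpha> n y = y} = UNIV" using assms(2) by (auto simp: minimal_action_def)
  then have i1: "interior {y. \<alpha> n y = y} = UNIV" by simp
  have i2: "interior {y. \<alpha> n y = y} = {}" using assms(3) n by (simp add: topologically_free_def)
  have "(UNIV::'a set) = {}" using trans[OF sym[OF i1] i2] .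
  then show False by simp
qed

lemma sign_const:
  fixes f :: "int \<Rightarrow> int"
  assumes jump: "\<And>k. \<bar>f (k+1) - f k\<bar> \<le> K"
    and big: "\<And>k. n \<le> k \<Longrightarrow> k \<le> m \<Longrightarrow> K < \<bar>f k\<bar>"
    and nm: "n \<le> m"
  shows "(0 < f m) = (0 < f n)"
proof -
  have "i \<le> m \<longrightarrow> (0 < f i) = (0 < f n)" if "n \<le> i" for i
    using that
  proof (induct i rule: int_ge_induct)
    case base
    then show ?case by simp
  next
    case (step i)
    show ?case
    proof
      assume "i + 1 \<le> m"
      then have "i \<le> m" by simp
      then have ih: "(0 < f i) = (0 < f n)" using step by simp
      have b1: "K < \<bar>f i\<bar>" using big step \<open>i \<le> m\<close> by simp
      have b2: "K < \<bar>f (i+1)\<bar>" using big step \<open>i + 1 \<le> m\<close> by simp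
      have "(0 < f (i+1)) = (0 < f i)" using jump[of i] b1 b2 by arith
      then show "(0 < f (i+1)) = (0 < f n)" using ih by simp
    qed
  qed
  from this[OF nm] show ?thesis by blast
qed

lemma count_shift:
  fixes f :: "int \<Rightarrow> int"
  assumes fin: "finite I" and inj: "inj_on f I" and le: "lo \<le> hi"
    and pre: "\<And>v. lo \<le> v \<Longrightarrow> v < hi \<Longrightarrow> v \<in> f ` I"
  shows "int (card {j\<in>I. f j < hi}) = int (card {j\<in>I. f j < lo}) + (hi - lo)"
proof -
  have split: "{j\<in>I. f j < hi} = {j\<in>I. f j < lo} \<union> {j\<in>I. lo \<le> f j \<and> f j < hi}"
    using le by auto
  have disj: "{j\<in>I. f j < lo} \<inter> {j\<in>I. lo \<le> f j \<and> f j < hi} = {}" by auto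
  have img: "f ` {j\<in>I. lo \<le> f j \<and> f j < hi} = {lo..<hi}"
  proof
    show "f ` {j\<in>I. lo \<le> f j \<and> f j < hi} \<subseteq> {lo..<hi}" by auto
    show "{lo..<hi} \<subseteq> f ` {j\<in>I. lo \<le> f j \<and> f j < hi}"
    proof
      fix v assume v: "v \<in> {lo..<hi}"
      then obtain j where j: "j \<in> I" "v = f j" using pre by fastforce
      then show "v \<in> f ` {j\<in>I. lo \<le> f j \<and> f j < hi}" using v by auto
    qed
  qed
  have "inj_on f {j\<in>I. lo \<le> f j \<and> f j < hi}"
    by (rule inj_on_subset[OF inj]) auto
  then have "card {j\<in>I. lo \<le> f j \<and> f j < hi} = card {lo..<hi}"
    using card_image img by metis
  also have "\<dots> = nat (hi - lo)" by simp
  finally have c2: "int (card {j\<in>I. lo \<le> f j \<and> f j < hi}) = hi - lo" using le by simp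
  have "card {j\<in>I. f j < hi} = card {j\<in>I. f j < lo} + card {j\<in>I. lo \<le> f j \<and> f j < hi}"
    unfolding split by (rule card_Un_disjoint) (use fin disj in auto)
  then show ?thesis using c2 by simp
qed

locale coe =
  fixes \<alpha> \<beta> :: "int \<Rightarrow> 'a::t2_space \<Rightarrow> 'a" and \<phi> \<psi> :: "'a \<Rightarrow> 'a"
    and a b :: "int \<Rightarrow> 'a \<Rightarrow> int" and K :: int
  assumes cpt: "compact (UNIV::'a set)"
    and acta: "int_action \<alpha>" and actb: "int_action \<beta>"
    and mina: "minimal_action \<alpha>" and minb: "minimal_action \<beta>"
    and freea: "\<And>n x. \<alpha> n x = x \<Longrightarrow> n = 0"
    and freeb: "\<And>n y. \<beta> n y = y \<Longrightarrow> n = 0"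
    and hom: "homeomorphic_maps euclidean euclidean \<phi> \<psi>"
    and ca: "continuous_map (prod_topology (discrete_topology UNIV) euclidean) (discrete_topology UNIV) (\<lambda>(g, z). a g z)"
    and eqa: "\<And>g z. \<phi> (\<alpha> g z) = \<beta> (a g z) (\<phi> z)"
    and eqb: "\<And>h z. \<psi> (\<beta> h z) = \<alpha> (b h z) (\<psi> z)"
    and Ka: "\<And>x. \<bar>a 1 x\<bar> \<le> K" and Kb: "\<And>y. \<bar>b 1 y\<bar> \<le> K" and K1: "1 \<le> K"
begin

lemma a_comp: "\<alpha> (m + n) x = \<alpha> m (\<alpha> n x)"
  using acta unfolding int_action_def by (metis comp_apply)
lemma b_comp: "\<beta> (m + n) x = \<beta> m (\<beta> n x)"
  using actb unfolding int_action_def by (metis comp_apply)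
lemma a_zero_act: "\<alpha> 0 x = x"
  using acta unfolding int_action_def by simp
lemma b_zero_act: "\<beta> 0 x = x"
  using actb unfolding int_action_def by simp
lemma psi_phi: "\<psi> (\<phi> x) = x"
  using hom unfolding homeomorphic_maps_def by simp
lemma phi_psi: "\<phi> (\<psi> x) = x"
  using hom unfolding homeomorphic_maps_def by simp

lemma beta_inj: assumes "\<beta> p y = \<beta> q y" shows "p = q"
proof -
  have "\<beta> (p - q) (\<beta> q y) = \<beta> p y" using b_comp[of "p - q" q y] by simp
  then have "\<beta> (p - q) (\<beta> q y) = \<beta> q y" using assms by simp
  then show ?thesis using freeb by fastforce
qed

lemma alpha_inj: assumes "\<alpha> p y = \<alpha> q y" shows "p = q"
proof -
  have "\<alpha> (p - q) (\<alpha> q y) = \<alpha> p y" using a_comp[of "p - q" q y] by simp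
  then have "\<alpha> (p - q) (\<alpha> q y) = \<alpha> q y" using assms by simp
  then show ?thesis using freea by fastforce
qed

lemma a_coc: "a (n + m) x = a n (\<alpha> m x) + a m x"
proof -
  have "\<beta> (a (n + m) x) (\<phi> x) = \<phi> (\<alpha> (n + m) x)" using eqa by simp
  also have "\<dots> = \<phi> (\<alpha> n (\<alpha> m x))" using a_comp by simp
  also have "\<dots> = \<beta> (a n (\<alpha> m x)) (\<beta> (a m x) (\<phi> x))" using eqa by simp
  also have "\<dots> = \<beta> (a n (\<alpha> m x) + a m x) (\<phi> x)" using b_comp by simp
  finally show ?thesis by (rule beta_inj)
qed

lemma b_coc: "b (n + m) y = b n (\<beta> m y) + b m y"
proof -
  have "\<alpha> (b (n + m) y) (\<psi> y) = \<psi> (\<beta> (n + m) y)" using eqb by simp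
  also have "\<dots> = \<psi> (\<beta> n (\<beta> m y))" using b_comp by simp
  also have "\<dots> = \<alpha> (b n (\<beta> m y)) (\<alpha> (b m y) (\<psi> y))" using eqb by simp
  also have "\<dots> = \<alpha> (b n (\<beta> m y) + b m y) (\<psi> y)" using a_comp by simp
  finally show ?thesis by (rule alpha_inj)
qed

lemma ab: "a (b m (\<phi> x)) x = m"
proof -
  have "\<beta> (a (b m (\<phi> x)) x) (\<phi> x) = \<phi> (\<alpha> (b m (\<phi> x)) x)" using eqa by simp
  also have "\<dots> = \<phi> (\<alpha> (b m (\<phi> x)) (\<psi> (\<phi> x)))" using psi_phi by simp
  also have "\<dots> = \<phi> (\<psi> (\<beta> m (\<phi> x)))" using eqb by simp
  also have "\<dots> = \<beta> m (\<phi> x)" using phi_psi by simp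
  finally show ?thesis by (rule beta_inj)
qed

lemma ba: "b (a n x) (\<phi> x) = n"
proof -
  have "\<alpha> (b (a n x) (\<phi> x)) x = \<alpha> (b (a n x) (\<phi> x)) (\<psi> (\<phi> x))" using psi_phi by simp
  also have "\<dots> = \<psi> (\<beta> (a n x) (\<phi> x))" using eqb by simp
  also have "\<dots> = \<psi> (\<phi> (\<alpha> n x))" using eqa by simp
  also have "\<dots> = \<alpha> n x" using psi_phi by simp
  finally show ?thesis by (rule alpha_inj)
qed

lemma a_bound: "\<bar>a n x\<bar> \<le> K * \<bar>n\<bar>"
proof -
  have "\<forall>x. \<bar>a n x\<bar> \<le> K * \<bar>n\<bar>"
  proof (induct n rule: int_induct[where k=0])
    case base
    have "a 0 x = 0" for x using a_coc[of 0 0 x] by (simp add: a_zero_act)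
    then show ?case by simp
  next
    case (step1 i)
    show ?case
    proof
      fix x
      have e: "a (1 + i) x = a 1 (\<alpha> i x) + a i x" by (rule a_coc)
      have "\<bar>a (1 + i) x\<bar> \<le> K + K * \<bar>i\<bar>" using e Ka[of "\<alpha> i x"] step1(2)[rule_format, of x] by arith
      also have "\<dots> = K * \<bar>i + 1\<bar>" using step1(1) by (simp add: algebra_simps)
      finally show "\<bar>a (i + 1) x\<bar> \<le> K * \<bar>i + 1\<bar>" by (simp add: add.commute)
    qed
  next
    case (step2 i)
    show ?case
    proof
      fix x
      have e: "a (1 + (i - 1)) x = a 1 (\<alpha> (i - 1) x) + a (i - 1) x" by (rule a_coc)
      have "\<bar>a (i - 1) x\<bar> \<le> K + K * \<bar>i\<bar>" using e Ka[of "\<alpha> (i - 1) x"] step2(2)[rule_format, of x] by simp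
      also have "\<dots> = K * \<bar>i - 1\<bar>" using step2(1) by (simp add: algebra_simps)
      finally show "\<bar>a (i - 1) x\<bar> \<le> K * \<bar>i - 1\<bar>" .
    qed
  qed
  then show ?thesis by blast
qed

lemma b_bound: "\<bar>b n y\<bar> \<le> K * \<bar>n\<bar>"
proof -
  have "\<forall>y. \<bar>b n y\<bar> \<le> K * \<bar>n\<bar>"
  proof (induct n rule: int_induct[where k=0])
    case base
    have "b 0 y = 0" for y using b_coc[of 0 0 y] by (simp add: b_zero_act)
    then show ?case by simp
  next
    case (step1 i)
    show ?case
    proof
      fix y
      have e: "b (1 + i) y = b 1 (\<beta> i y) + b i y" by (rule b_coc)
      have "\<bar>b (1 + i) y\<bar> \<le> K + K * \<bar>i\<bar>" using e Kb[of "\<beta> i y"] step1(2)[rule_format, of y] by arith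
      also have "\<dots> = K * \<bar>i + 1\<bar>" using step1(1) by (simp add: algebra_simps)
      finally show "\<bar>b (i + 1) y\<bar> \<le> K * \<bar>i + 1\<bar>" by (simp add: add.commute)
    qed
  next
    case (step2 i)
    show ?case
    proof
      fix y
      have e: "b (1 + (i - 1)) y = b 1 (\<beta> (i - 1) y) + b (i - 1) y" by (rule b_coc)
      have "\<bar>b (i - 1) y\<bar> \<le> K + K * \<bar>i\<bar>" using e Kb[of "\<beta> (i - 1) y"] step2(2)[rule_format, of y] by simp
      also have "\<dots> = K * \<bar>i - 1\<bar>" using step2(1) by (simp add: algebra_simps)
      finally show "\<bar>b (i - 1) y\<bar> \<le> K * \<bar>i - 1\<bar>" .
    qed
  qed
  then show ?thesis by blast
qed

lemma a_jump: "\<bar>a (k + 1) x - a k x\<bar> \<le> K"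
  using a_coc[of 1 k x] Ka[of "\<alpha> k x"] by (simp add: add.commute)

lemma a_inj: assumes "a n x = a m x" shows "n = m"
proof -
  have "n = b (a n x) (\<phi> x)" using ba[of n x] by (rule sym)
  also have "\<dots> = b (a m x) (\<phi> x)" using assms by (rule arg_cong)
  also have "\<dots> = m" by (rule ba)
  finally show ?thesis .
qed

lemma small_n: assumes "\<bar>a n x\<bar> \<le> K" shows "\<bar>n\<bar> \<le> K * K"
proof -
  have "\<bar>n\<bar> = \<bar>b (a n x) (\<phi> x)\<bar>" using ba by simp
  also have "\<dots> \<le> K * \<bar>a n x\<bar>" by (rule b_bound)
  also have "\<dots> \<le> K * K" using assms K1 by (simp add: mult_left_mono)
  finally show ?thesis .
qed

lemma big: assumes "K * K < \<bar>n\<bar>" shows "K < \<bar>a n x\<bar>"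
proof (rule ccontr)
  assume "\<not> K < \<bar>a n x\<bar>"
  then have "\<bar>a n x\<bar> \<le> K" by simp
  then have "\<bar>n\<bar> \<le> K * K" by (rule small_n)
  then show False using assms by simp
qed

end

context coe begin

lemma orient_inv: "(0 < a (K*K+1) (\<alpha> 1 x)) = (0 < a (K*K+1) x)"
proof -
  have KK: "0 \<le> K * K" using K1 by simp
  have s: "(0 < a (K*K+1+1) x) = (0 < a (K*K+1) x)"
    by (rule sign_const[where f="\<lambda>k. a k x" and K=K]) (use a_jump big KK in auto)
  have e: "a (K*K+1+1) x = a (K*K+1) (\<alpha> 1 x) + a 1 x" by (rule a_coc)
  have b1: "K < \<bar>a (K*K+1) (\<alpha> 1 x)\<bar>" by (rule big) (use KK in simp)
  have b2: "K < \<bar>a (K*K+1+1) x\<bar>" by (rule big) (use KK in simp)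
  have "(0 < a (K*K+1) (\<alpha> 1 x)) = (0 < a (K*K+1+1) x)"
    using e b1 b2 Ka[of x] by arith
  then show ?thesis using s by simp
qed

lemma orient_inv_all: "(0 < a (K*K+1) (\<alpha> n x)) = (0 < a (K*K+1) x)"
proof -
  have "\<forall>x. (0 < a (K*K+1) (\<alpha> n x)) = (0 < a (K*K+1) x)"
  proof (induct n rule: int_induct[where k=0])
    case base
    then show ?case by (simp add: a_zero_act)
  next
    case (step1 i)
    show ?case
    proof
      fix x
      have "\<alpha> (i + 1) x = \<alpha> 1 (\<alpha> i x)" using a_comp[of 1 i x] by (simp add: add.commute)
      then show "(0 < a (K*K+1) (\<alpha> (i+1) x)) = (0 < a (K*K+1) x)"
        using orient_inv[of "\<alpha> i x"] step1(2) by simp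
    qed
  next
    case (step2 i)
    show ?case
    proof
      fix x
      have eq: "\<alpha> i x = \<alpha> 1 (\<alpha> (i - 1) x)" using a_comp[of 1 "i - 1" x] by simp
      have "(0 < a (K*K+1) (\<alpha> i x)) = (0 < a (K*K+1) x)" using step2(2) by blast
      then have "(0 < a (K*K+1) (\<alpha> 1 (\<alpha> (i - 1) x))) = (0 < a (K*K+1) x)" by (simp only: eq)
      then show "(0 < a (K*K+1) (\<alpha> (i - 1) x)) = (0 < a (K*K+1) x)"
        using orient_inv[of "\<alpha> (i - 1) x"] by simp
    qed
  qed
  then show ?thesis by blast
qed

lemma a_cont: "continuous_map euclidean (discrete_topology UNIV) (a n)"
  using cont_section[OF ca] .

lemma orientation: "(\<forall>x. 0 < a (K*K+1) x) \<or> (\<forall>x. a (K*K+1) x < 0)"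
proof (cases "\<exists>x0. 0 < a (K*K+1) x0")
  case True
  then obtain x0 where x0: "0 < a (K*K+1) x0" by blast
  have cl: "closed {x. 0 < a (K*K+1) x}" using disc_closed[OF a_cont] .
  have "range (\<lambda>n. \<alpha> n x0) \<subseteq> {x. 0 < a (K*K+1) x}" using x0 orient_inv_all by auto
  then have "closure (range (\<lambda>n. \<alpha> n x0)) \<subseteq> {x. 0 < a (K*K+1) x}"
    by (rule closure_minimal[OF _ cl])
  then have "\<forall>x. 0 < a (K*K+1) x" using mina unfolding minimal_action_def by auto
  then show ?thesis by blast
next
  case False
  have KK: "0 \<le> K * K" using K1 by simp
  have "a (K*K+1) x < 0" for x
  proof -
    have "K < \<bar>a (K*K+1) x\<bar>" by (rule big) (use KK in simp)
    moreover have "\<not> 0 < a (K*K+1) x" using False by blast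
    ultimately show ?thesis using K1 by arith
  qed
  then show ?thesis by blast
qed

end

context coe begin

definition cf :: "'a \<Rightarrow> int" where
  "cf x = - int (card {k \<in> {-(K*K+1)..K*K+1}. a k x < 0})"

definition th :: "'a \<Rightarrow> 'a" where
  "th x = \<beta> (cf x) (\<phi> x)"

lemma cf_cont: "continuous_map euclidean (discrete_topology UNIV) cf"
proof (rule cont_of_lc)
  fix x0
  define I where "I = {-(K*K+1)..K*K+1}"
  define U where "U = (\<Inter>k\<in>I. {x. a k x = a k x0})"
  have "open U" unfolding U_def
    by (rule open_INT) (auto simp: I_def intro: disc_open[OF a_cont])
  moreover have "x0 \<in> U" unfolding U_def by simp
  moreover have "\<forall>x\<in>U. cf x = cf x0"
  proof
    fix x assume "x \<in> U"
    then have "\<forall>k\<in>I. a k x = a k x0" unfolding U_def by simp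
    then have "{k \<in> I. a k x < 0} = {k \<in> I. a k x0 < 0}" by auto
    then show "cf x = cf x0" unfolding cf_def I_def by simp
  qed
  ultimately show "\<exists>U. open U \<and> x0 \<in> U \<and> (\<forall>x\<in>U. cf x = cf x0)" by blast
qed

lemma phi_cont: "continuous_map euclidean euclidean \<phi>"
  using hom unfolding homeomorphic_maps_def by simp

lemma beta_cont: "continuous_map (prod_topology (discrete_topology UNIV) euclidean) euclidean (\<lambda>(n, x). \<beta> n x)"
  using actb unfolding int_action_def by simp

lemma th_cont: "continuous_on UNIV th"
proof -
  have "continuous_map euclidean (prod_topology (discrete_topology UNIV) euclidean) (\<lambda>x. (cf x, \<phi> x))"
    by (intro continuous_map_pairedI cf_cont phi_cont)
  from continuous_map_compose[OF this beta_cont]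
  have "continuous_map euclidean euclidean th" by (simp add: o_def th_def)
  then show ?thesis by simp
qed

context
  assumes pos: "\<And>x. 0 < a (K*K+1) x"
begin

lemma pos_side: assumes n: "K * K < n" shows "K < a n x"
proof -
  have KK: "0 \<le> K * K" using K1 by simp
  have "(0 < a n x) = (0 < a (K*K+1) x)"
  proof (rule sign_const[where f="\<lambda>k. a k x" and K=K])
    show "\<And>k. \<bar>a (k + 1) x - a k x\<bar> \<le> K" by (rule a_jump)
    show "\<And>k. K * K + 1 \<le> k \<Longrightarrow> k \<le> n \<Longrightarrow> K < \<bar>a k x\<bar>" by (rule big) (use KK in simp)
    show "K * K + 1 \<le> n" using n by simp
  qed
  then have "0 < a n x" using pos by simp
  moreover have "K < \<bar>a n x\<bar>" by (rule big) (use n KK in simp)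
  ultimately show ?thesis by simp
qed

lemma neg_side: assumes n: "n < - (K * K)" shows "a n x < - K"
proof -
  have KK: "0 \<le> K * K" using K1 by simp
  define m1 where "m1 = - (K * (K * K) + 1)"
  define n1 where "n1 = b m1 (\<phi> x)"
  have an1: "a n1 x = m1" unfolding n1_def by (rule ab)
  have ineq: "\<bar>m1\<bar> \<le> K * \<bar>n1\<bar>" using a_bound[of n1 x] an1 by simp
  have KKK: "0 \<le> K * (K * K)" using K1 by simp
  have "\<bar>m1\<bar> = K * (K * K) + 1" unfolding m1_def using KKK by simp
  with ineq have "K * (K * K) < K * \<bar>n1\<bar>" by simp
  then have "K * K < \<bar>n1\<bar>" using K1 by (simp add: mult_less_cancel_left)
  moreover have "\<not> K * K < n1"
  proof
    assume "K * K < n1"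
    then have "K < a n1 x" by (rule pos_side)
    then show False using an1 K1 KKK unfolding m1_def by simp
  qed
  ultimately have n1neg: "n1 < - (K * K)" by simp
  have neg1: "\<not> 0 < a n1 x" using an1 KKK unfolding m1_def by linarith
  have bigk: "\<And>k. k < - (K * K) \<Longrightarrow> K < \<bar>a k x\<bar>" by (rule big) simp
  have "(0 < a n x) = (0 < a n1 x)"
  proof (cases "n \<le> n1")
    case True
    have "(0 < a n1 x) = (0 < a n x)"
      by (rule sign_const[where f="\<lambda>k. a k x" and K=K]) (use a_jump bigk n1neg True in auto)
    then show ?thesis by simp
  next
    case False
    show ?thesis
      by (rule sign_const[where f="\<lambda>k. a k x" and K=K]) (use a_jump bigk n False in auto)
  qed
  then have "\<not> 0 < a n x" using neg1 by simp
  moreover have "K < \<bar>a n x\<bar>" using bigk n by simp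
  ultimately show ?thesis by simp
qed

end
end

context coe begin

context
  assumes pos: "\<And>x. 0 < a (K*K+1) x"
begin

lemma cf_step: "cf (\<alpha> 1 x) = cf x + 1 - a 1 x"
proof -
  define M where "M = K*K+1"
  define A where "A = a 1 x"
  have KK: "0 \<le> K * K" using K1 by simp
  have ak: "a (k+1) x = a k (\<alpha> 1 x) + A" for k using a_coc[of k 1 x] by (simp add: A_def)
  have s1: "{k \<in> {-M..M}. a k (\<alpha> 1 x) < 0} = {k \<in> {-M..M}. a (k+1) x < A}"
    using ak by auto
  have s2: "{j \<in> {-M+1..M+1}. a j x < A} = (\<lambda>k. k+1) ` {k \<in> {-M..M}. a (k+1) x < A}"
  proof (rule set_eqI)
    fix j
    show "j \<in> {j \<in> {-M+1..M+1}. a j x < A} \<longleftrightarrow> j \<in> (\<lambda>k. k+1) ` {k \<in> {-M..M}. a (k+1) x < A}"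
    proof
      assume "j \<in> {j \<in> {-M+1..M+1}. a j x < A}"
      then show "j \<in> (\<lambda>k. k+1) ` {k \<in> {-M..M}. a (k+1) x < A}"
        by (intro image_eqI[of _ _ "j - 1"]) auto
    next
      assume "j \<in> (\<lambda>k. k+1) ` {k \<in> {-M..M}. a (k+1) x < A}"
      then show "j \<in> {j \<in> {-M+1..M+1}. a j x < A}" by auto
    qed
  qed
  have c2: "card {j \<in> {-M+1..M+1}. a j x < A} = card {k \<in> {-M..M}. a (k+1) x < A}"
    unfolding s2 by (rule card_image) (simp add: inj_on_def)
  have Ab: "\<bar>A\<bar> \<le> K" unfolding A_def by (rule Ka)
  have fM: "a (-M) x < A"
  proof -
    have "a (-M) x < - K" by (rule neg_side[OF pos]) (simp add: M_def)
    then show ?thesis using Ab by simp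
  qed
  have fM1: "\<not> a (M+1) x < A"
  proof -
    have "K < a (M+1) x" by (rule pos_side[OF pos]) (simp add: M_def)
    then show ?thesis using Ab by simp
  qed
  have s3: "{j \<in> {-M+1..M+1}. a j x < A} = {j \<in> {-M..M}. a j x < A} - {-M}"
  proof (rule set_eqI)
    fix j
    show "j \<in> {j \<in> {-M+1..M+1}. a j x < A} \<longleftrightarrow> j \<in> {j \<in> {-M..M}. a j x < A} - {-M}"
    proof
      assume j: "j \<in> {j \<in> {-M+1..M+1}. a j x < A}"
      have "j \<noteq> M + 1" using j fM1 by auto
      then show "j \<in> {j \<in> {-M..M}. a j x < A} - {-M}" using j by auto
    next
      assume "j \<in> {j \<in> {-M..M}. a j x < A} - {-M}"
      then show "j \<in> {j \<in> {-M+1..M+1}. a j x < A}" by auto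
    qed
  qed
  have mem: "-M \<in> {j \<in> {-M..M}. a j x < A}" using fM KK by (simp add: M_def)
  have fin: "finite {j \<in> {-M..M}. a j x < A}" by (rule finite_subset[of _ "{-M..M}"]) auto
  have pos_card: "0 < card {j \<in> {-M..M}. a j x < A}" using mem fin card_gt_0_iff by blast
  have c3: "int (card ({j \<in> {-M..M}. a j x < A} - {-M})) = int (card {j \<in> {-M..M}. a j x < A}) - 1"
    using card_Diff_singleton[OF mem] pos_card by (simp add: of_nat_diff)
  have pre: "v \<in> (\<lambda>j. a j x) ` {-M..M}" if v: "\<bar>v\<bar> \<le> K" for v
  proof -
    have e: "a (b v (\<phi> x)) x = v" by (rule ab)
    have "\<bar>b v (\<phi> x)\<bar> \<le> K * \<bar>v\<bar>" by (rule b_bound)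
    also have "\<dots> \<le> K * K" using v K1 by (simp add: mult_left_mono)
    finally have "b v (\<phi> x) \<in> {-M..M}" unfolding M_def by auto
    then show ?thesis using e by (intro image_eqI[of _ _ "b v (\<phi> x)"]) auto
  qed
  have inj: "inj_on (\<lambda>j. a j x) {-M..M}" by (auto simp: inj_on_def intro: a_inj)
  have c4: "int (card {j \<in> {-M..M}. a j x < A}) = int (card {j \<in> {-M..M}. a j x < 0}) + A"
  proof (cases "0 \<le> A")
    case True
    have "int (card {j \<in> {-M..M}. a j x < A}) = int (card {j \<in> {-M..M}. a j x < 0}) + (A - 0)"
      by (rule count_shift[where f="\<lambda>j. a j x"]) (use True inj pre Ab in auto)
    then show ?thesis by simp
  next
    case False
    have "int (card {j \<in> {-M..M}. a j x < 0}) = int (card {j \<in> {-M..M}. a j x < A}) + (0 - A)"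
      by (rule count_shift[where f="\<lambda>j. a j x"]) (use False inj pre Ab in auto)
    then show ?thesis by simp
  qed
  have "cf (\<alpha> 1 x) = - int (card {k \<in> {-M..M}. a k (\<alpha> 1 x) < 0})"
    unfolding cf_def M_def by simp
  also have "\<dots> = - int (card {j \<in> {-M+1..M+1}. a j x < A})" using s1 c2 by simp
  also have "\<dots> = - (int (card {j \<in> {-M..M}. a j x < A}) - 1)" using s3 c3 by simp
  also have "\<dots> = - int (card {j \<in> {-M..M}. a j x < 0}) - A + 1" using c4 by simp
  also have "\<dots> = cf x + 1 - a 1 x" unfolding cf_def M_def A_def by simp
  finally show ?thesis .
qed

lemma th_step: "th (\<alpha> 1 x) = \<beta> 1 (th x)"
proof -
  have "th (\<alpha> 1 x) = \<beta> (cf (\<alpha> 1 x)) (\<beta> (a 1 x) (\<phi> x))" unfolding th_def by (simp add: eqa)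
  also have "\<dots> = \<beta> (cf (\<alpha> 1 x) + a 1 x) (\<phi> x)" by (simp add: b_comp)
  also have "\<dots> = \<beta> (1 + cf x) (\<phi> x)" by (simp add: cf_step add.commute)
  also have "\<dots> = \<beta> 1 (th x)" unfolding th_def by (simp add: b_comp)
  finally show ?thesis .
qed

lemma th_eq: "th (\<alpha> n x) = \<beta> n (th x)"
proof -
  have "\<forall>x. th (\<alpha> n x) = \<beta> n (th x)"
  proof (induct n rule: int_induct[where k=0])
    case base
    then show ?case by (simp add: a_zero_act b_zero_act)
  next
    case (step1 i)
    show ?case
    proof
      fix x
      have "th (\<alpha> (i + 1) x) = th (\<alpha> 1 (\<alpha> i x))" using a_comp[of 1 i x] by (simp add: add.commute)
      also have "\<dots> = \<beta> 1 (\<beta> i (th x))" using th_step step1(2) by simp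
      also have "\<dots> = \<beta> (i + 1) (th x)" using b_comp[of 1 i] by (simp add: add.commute)
      finally show "th (\<alpha> (i + 1) x) = \<beta> (i + 1) (th x)" .
    qed
  next
    case (step2 i)
    show ?case
    proof
      fix x
      have "\<beta> i (th x) = th (\<alpha> i x)" using step2(2) by simp
      also have "\<dots> = th (\<alpha> 1 (\<alpha> (i - 1) x))" using a_comp[of 1 "i - 1" x] by simp
      also have "\<dots> = \<beta> 1 (th (\<alpha> (i - 1) x))" by (rule th_step)
      finally have e: "\<beta> i (th x) = \<beta> 1 (th (\<alpha> (i - 1) x))" .
      have "th (\<alpha> (i - 1) x) = \<beta> (-1) (\<beta> 1 (th (\<alpha> (i - 1) x)))"
        using b_comp[of "-1" 1] by (simp add: b_zero_act)
      also have "\<dots> = \<beta> (-1) (\<beta> i (th x))" using e by simp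
      also have "\<dots> = \<beta> (i - 1) (th x)" using b_comp[of "-1" i] by simp
      finally show "th (\<alpha> (i - 1) x) = \<beta> (i - 1) (th x)" .
    qed
  qed
  then show ?thesis by blast
qed

lemma th_inj: "inj th"
proof (rule injI)
  fix x y assume e: "th x = th y"
  define d where "d = cf x - cf y"
  have "\<phi> y = \<beta> (- cf y) (\<beta> (cf y) (\<phi> y))" using b_comp[of "- cf y" "cf y"] by (simp add: b_zero_act)
  also have "\<dots> = \<beta> (- cf y) (\<beta> (cf x) (\<phi> x))" using e unfolding th_def by simp
  also have "\<dots> = \<beta> d (\<phi> x)" using b_comp[of "- cf y" "cf x"] by (simp add: d_def)
  finally have py: "\<phi> y = \<beta> d (\<phi> x)" .
  define m where "m = b d (\<phi> x)"
  have ym: "y = \<alpha> m x"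
  proof -
    have "y = \<psi> (\<phi> y)" by (simp add: psi_phi)
    also have "\<dots> = \<alpha> m (\<psi> (\<phi> x))" using py eqb unfolding m_def by simp
    finally show ?thesis by (simp add: psi_phi)
  qed
  have "\<beta> m (th x) = th x" using th_eq[of m x] ym e by simp
  then have "m = 0" by (rule freeb)
  then show "x = y" using ym by (simp add: a_zero_act)
qed

lemma th_surj: "range th = UNIV"
proof -
  have cl: "closed (range th)"
    using compact_imp_closed compact_continuous_image[OF th_cont cpt] by blast
  obtain x0 :: 'a where True by blast
  have "range (\<lambda>n. \<beta> n (th x0)) \<subseteq> range th"
  proof
    fix y assume "y \<in> range (\<lambda>n. \<beta> n (th x0))"
    then obtain n where "y = \<beta> n (th x0)" by blast
    then have "y = th (\<alpha> n x0)" by (simp add: th_eq)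
    then show "y \<in> range th" by blast
  qed
  then have "closure (range (\<lambda>n. \<beta> n (th x0))) \<subseteq> range th" by (rule closure_minimal[OF _ cl])
  then show ?thesis using minb unfolding minimal_action_def by auto
qed

lemma core: "\<exists>\<theta>. homeomorphic_map euclidean euclidean \<theta> \<and> (\<forall>n x. \<theta> (\<alpha> n x) = \<beta> n (\<theta> x))"
proof -
  obtain g where g: "homeomorphism UNIV UNIV th g"
    using homeomorphism_compact[OF cpt th_cont th_surj] th_inj by blast
  have "homeomorphic_maps euclidean euclidean th g"
    using g unfolding homeomorphism_def homeomorphic_maps_def by simp
  then have "homeomorphic_map euclidean euclidean th" using homeomorphic_map_maps by blast
  then show ?thesis using th_eq by blast
qed

end
end

lemma neg_map_cont:
  "continuous_map (prod_topology (discrete_topology UNIV) euclidean)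
     (prod_topology (discrete_topology (UNIV::int set)) (euclidean::'a::topological_space topology)) (\<lambda>p. (- fst p, snd p))"
proof (intro continuous_map_pairedI)
  have "continuous_map (prod_topology (discrete_topology (UNIV::int set)) (euclidean::'a topology)) (discrete_topology UNIV) (uminus \<circ> fst)"
    by (rule continuous_map_compose[OF continuous_map_fst]) simp
  then show "continuous_map (prod_topology (discrete_topology (UNIV::int set)) (euclidean::'a topology)) (discrete_topology UNIV) (\<lambda>p. - fst p)"
    by (simp add: o_def)
  show "continuous_map (prod_topology (discrete_topology (UNIV::int set)) (euclidean::'a topology)) euclidean snd"
    by (rule continuous_map_snd)
qed

lemma flip_action:
  fixes \<beta> :: "int \<Rightarrow> 'a::topological_space \<Rightarrow> 'a"
  assumes "int_action \<beta>"
  shows "int_action (\<lambda>n. \<beta> (- n))"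
proof -
  have c: "continuous_map (prod_topology (discrete_topology UNIV) euclidean) euclidean (\<lambda>(n, x). \<beta> n x)"
    and z: "\<beta> 0 = id" and s: "\<And>m n. \<beta> (m + n) = \<beta> m \<circ> \<beta> n"
    using assms unfolding int_action_def by auto
  have "continuous_map (prod_topology (discrete_topology UNIV) euclidean) euclidean ((\<lambda>(n, x). \<beta> n x) \<circ> (\<lambda>p. (- fst p, snd p)))"
    by (rule continuous_map_compose[OF neg_map_cont c])
  then have c': "continuous_map (prod_topology (discrete_topology UNIV) euclidean) euclidean (\<lambda>(n, x). \<beta> (- n) x)"
    by (simp add: o_def case_prod_unfold)
  have s': "\<beta> (- (m + n)) = \<beta> (- m) \<circ> \<beta> (- n)" for m n
    using s[of "- m" "- n"] by simp
  show ?thesis unfolding int_action_def using z s' c' by simp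
qed

lemma flip_minimal:
  assumes "minimal_action \<beta>"
  shows "minimal_action (\<lambda>n. \<beta> (- n))"
proof -
  have "range (\<lambda>n. \<beta> (- n) y) = range (\<lambda>n. \<beta> n y)" for y
  proof
    show "range (\<lambda>n. \<beta> (- n) y) \<subseteq> range (\<lambda>n. \<beta> n y)" by auto
    show "range (\<lambda>n. \<beta> n y) \<subseteq> range (\<lambda>n. \<beta> (- n) y)"
    proof
      fix z assume "z \<in> range (\<lambda>n. \<beta> n y)"
      then obtain n where "z = \<beta> n y" by blast
      then show "z \<in> range (\<lambda>n. \<beta> (- n) y)" by (intro image_eqI[of _ _ "- n"]) auto
    qed
  qed
  then show ?thesis using assms unfolding minimal_action_def by simp
qed

context coe begin

lemma conj_main: "\<exists>\<theta> \<epsilon>. homeomorphic_map euclidean euclidean \<theta> \<and> (\<epsilon> = 1 \<or> \<epsilon> = -1)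
   \<and> (\<forall>n x. \<theta> (\<alpha> n x) = \<beta> (\<epsilon> * n) (\<theta> x))"
proof (cases "\<forall>x. 0 < a (K*K+1) x")
  case True
  then obtain \<theta> where "homeomorphic_map euclidean euclidean \<theta>" "\<forall>n x. \<theta> (\<alpha> n x) = \<beta> n (\<theta> x)"
    using core by blast
  then show ?thesis by (intro exI[of _ \<theta>] exI[of _ 1]) simp
next
  case False
  then have neg: "\<forall>x. a (K*K+1) x < 0" using orientation by blast
  have ca': "continuous_map (prod_topology (discrete_topology UNIV) euclidean) (discrete_topology UNIV) (\<lambda>(g, z). - a g z)"
  proof -
    have "continuous_map (prod_topology (discrete_topology UNIV) euclidean) (discrete_topology UNIV) (uminus \<circ> (\<lambda>(g, z). a g z))"
      by (rule continuous_map_compose[OF ca]) simp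
    then show ?thesis by (simp add: o_def case_prod_unfold)
  qed
  have fb': "\<And>n y. \<beta> (- n) y = y \<Longrightarrow> n = 0" using freeb by fastforce
  have eqa': "\<And>g z. \<phi> (\<alpha> g z) = \<beta> (- (- a g z)) (\<phi> z)" using eqa by simp
  have Ka': "\<And>x. \<bar>- a 1 x\<bar> \<le> K" using Ka by simp
  have Kb': "\<And>y. \<bar>b (- 1) y\<bar> \<le> K" using b_bound[of "-1"] by simp
  have C: "coe \<alpha> (\<lambda>n. \<beta> (- n)) \<phi> \<psi> (\<lambda>n x. - a n x) (\<lambda>n y. b (- n) y) K"
    by (rule coe.intro[OF cpt acta flip_action[OF actb] mina flip_minimal[OF minb] freea fb' hom ca' eqa' eqb Ka' Kb' K1])
  have pos': "\<And>x. 0 < - a (K*K+1) x" using neg by simp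
  obtain \<theta> where "homeomorphic_map euclidean euclidean \<theta>" "\<forall>n x. \<theta> (\<alpha> n x) = \<beta> (- n) (\<theta> x)"
    using coe.core[OF C pos'] by blast
  then show ?thesis by (intro exI[of _ \<theta>] exI[of _ "-1"]) simp
qed

end

lemma ind_simp: "induced_action \<gamma> (n, e) (c, x) = (e \<noteq> c, \<gamma> (if e \<noteq> c then - n else n) x)"
  by (simp add: induced_action_def dcocycle_def dcoset_def dmult_def dlift_def dinv_def)

lemma cont_slice:
  fixes c :: "int \<times> bool \<Rightarrow> bool \<times> 'a::topological_space \<Rightarrow> 'b \<times> 'd"
  assumes "continuous_map (prod_topology (discrete_topology UNIV) Xtop) (discrete_topology UNIV) (\<lambda>(g, y). c g y)"
  shows "continuous_map (prod_topology (discrete_topology UNIV) euclidean) (discrete_topology UNIV)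
           (\<lambda>(n, x). fst (c (n, False) (False, x)))"
proof -
  have m1: "continuous_map (prod_topology (discrete_topology (UNIV::int set)) (euclidean::'a topology))
       (discrete_topology UNIV) (\<lambda>p. (fst p, False))"
  proof -
    have "continuous_map (prod_topology (discrete_topology (UNIV::int set)) (euclidean::'a topology))
       (discrete_topology UNIV) ((\<lambda>n. (n, False)) \<circ> fst)"
      by (rule continuous_map_compose[OF continuous_map_fst]) simp
    then show ?thesis by (simp add: o_def)
  qed
  have m2: "continuous_map (prod_topology (discrete_topology (UNIV::int set)) (euclidean::'a topology))
       Xtop (\<lambda>p. (False, snd p))"
    unfolding Xtop_def by (intro continuous_map_pairedI continuous_map_snd) simp
  have m: "continuous_map (prod_topology (discrete_topology (UNIV::int set)) (euclidean::'a topology))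
     (prod_topology (discrete_topology UNIV) Xtop) (\<lambda>p. ((fst p, False), (False, snd p)))"
    by (rule continuous_map_pairedI[OF m1 m2])
  have "continuous_map (prod_topology (discrete_topology (UNIV::int set)) (euclidean::'a topology)) (discrete_topology UNIV)
      (fst \<circ> ((\<lambda>(g, y). c g y) \<circ> (\<lambda>p. ((fst p, False), (False, snd p)))))"
    by (rule continuous_map_compose[OF continuous_map_compose[OF m assms]]) simp
  then show ?thesis by (simp add: o_def case_prod_unfold)
qed

theorem mainTheorem12:
  fixes \<alpha> \<beta> :: "int \<Rightarrow> 'a::t2_space \<Rightarrow> 'a"
  assumes "compact (UNIV :: 'a set)"
    and "int_action \<alpha>" and "int_action \<beta>"
    and "minimal_action \<alpha>" and "minimal_action \<beta>"
    and "topologically_free \<alpha>" and "topologically_free \<beta>"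
  shows "((\<exists>c c'.
            continuous_map (prod_topology (discrete_topology UNIV) Xtop) (discrete_topology UNIV) (\<lambda>(g, y). c g y)
          \<and> continuous_map (prod_topology (discrete_topology UNIV) Xtop) (discrete_topology UNIV) (\<lambda>(g, y). c' g y)
          \<and> (\<forall>g y. induced_action \<alpha> g y = induced_action \<beta> (c g y) y)
          \<and> (\<forall>g y. induced_action \<beta> g y = induced_action \<alpha> (c' g y) y))
         \<longrightarrow> cont_orbit_equiv euclidean \<alpha> \<beta>)
       \<and> (cont_orbit_equiv euclidean \<alpha> \<beta>
         \<longrightarrow> conjugate_actions dmult Xtop (induced_action \<alpha>) (induced_action \<beta>))"
proof (intro conjI impI)
  assume "\<exists>c c'.
            continuous_map (prod_topology (discrete_topology UNIV) Xtop) (discrete_topology UNIV) (\<lambda>(g, y). c g y)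
          \<and> continuous_map (prod_topology (discrete_topology UNIV) Xtop) (discrete_topology UNIV) (\<lambda>(g, y). c' g y)
          \<and> (\<forall>g y. induced_action \<alpha> g y = induced_action \<beta> (c g y) y)
          \<and> (\<forall>g y. induced_action \<beta> g y = induced_action \<alpha> (c' g y) y)"
  then obtain c c' where
    cc: "continuous_map (prod_topology (discrete_topology UNIV) Xtop) (discrete_topology UNIV) (\<lambda>(g, y). c g y)"
    and cc': "continuous_map (prod_topology (discrete_topology UNIV) Xtop) (discrete_topology UNIV) (\<lambda>(g, y). c' g y)"
    and e1: "\<forall>g y. induced_action \<alpha> g y = induced_action \<beta> (c g y) y"
    and e2: "\<forall>g y. induced_action \<beta> g y = induced_action \<alpha> (c' g y) y"
    by blast
  define a where "a = (\<lambda>n x. fst (c (n, False) (False, x)))"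
  define b where "b = (\<lambda>n x. fst (c' (n, False) (False, x)))"
  have ea: "\<alpha> g z = \<beta> (a g z) z" for g z
  proof -
    have h: "induced_action \<alpha> (g, False) (False, z) = induced_action \<beta> (c (g, False) (False, z)) (False, z)"
      using e1 by blast
    obtain m e where me: "c (g, False) (False, z) = (m, e)" by fastforce
    show ?thesis using h unfolding a_def me by (simp add: ind_simp split: if_splits)
  qed
  have eb: "\<beta> g z = \<alpha> (b g z) z" for g z
  proof -
    have h: "induced_action \<beta> (g, False) (False, z) = induced_action \<alpha> (c' (g, False) (False, z)) (False, z)"
      using e2 by blast
    obtain m e where me: "c' (g, False) (False, z) = (m, e)" by fastforce
    show ?thesis using h unfolding b_def me by (simp add: ind_simp split: if_splits)
  qed
  have hid: "homeomorphic_maps euclidean euclidean id id" by (simp add: homeomorphic_maps_id)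
  have ca: "continuous_map (prod_topology (discrete_topology UNIV) euclidean) (discrete_topology UNIV) (\<lambda>(g, z). a g z)"
    unfolding a_def by (rule cont_slice[OF cc])
  have cb: "continuous_map (prod_topology (discrete_topology UNIV) euclidean) (discrete_topology UNIV) (\<lambda>(g, z). b g z)"
    unfolding b_def by (rule cont_slice[OF cc'])
  show "cont_orbit_equiv euclidean \<alpha> \<beta>"
    unfolding cont_orbit_equiv_def
    by (intro exI[of _ id] exI[of _ a] exI[of _ b] conjI hid ca cb) (simp_all add: ea[symmetric] eb[symmetric])
next
  assume "cont_orbit_equiv euclidean \<alpha> \<beta>"
  then obtain \<phi> \<psi> a b where hom: "homeomorphic_maps euclidean euclidean \<phi> \<psi>"
    and ca: "continuous_map (prod_topology (discrete_topology UNIV) euclidean) (discrete_topology UNIV) (\<lambda>(g, z). a g z)"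
    and cb: "continuous_map (prod_topology (discrete_topology UNIV) euclidean) (discrete_topology UNIV) (\<lambda>(h, z). b h z)"
    and ea: "\<forall>g z. z \<in> topspace euclidean \<longrightarrow> \<phi> (\<alpha> g z) = \<beta> (a g z) (\<phi> z)"
    and eb: "\<forall>h z. z \<in> topspace euclidean \<longrightarrow> \<psi> (\<beta> h z) = \<alpha> (b h z) (\<psi> z)"
    unfolding cont_orbit_equiv_def by blast
  have ea': "\<And>g z. \<phi> (\<alpha> g z) = \<beta> (a g z) (\<phi> z)" using ea by simp
  have eb': "\<And>h z. \<psi> (\<beta> h z) = \<alpha> (b h z) (\<psi> z)" using eb by simp
  have fa: "\<And>n x. \<alpha> n x = x \<Longrightarrow> n = 0" using free_of assms(2,4,6) by blast
  have fb: "\<And>n x. \<beta> n x = x \<Longrightarrow> n = 0" using free_of assms(3,5,7) by blast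
  obtain Ka where Ka: "\<forall>x. \<bar>a 1 x\<bar> \<le> Ka" using bounded_disc[OF assms(1) cont_section[OF ca]] by blast
  obtain Kb where Kb: "\<forall>x. \<bar>b 1 x\<bar> \<le> Kb" using bounded_disc[OF assms(1) cont_section[OF cb]] by blast
  define K where "K = max 1 (max Ka Kb)"
  have Ka': "\<And>x. \<bar>a 1 x\<bar> \<le> K" using Ka unfolding K_def by (meson max.coboundedI1 max.coboundedI2 order_trans)
  have Kb': "\<And>x. \<bar>b 1 x\<bar> \<le> K" using Kb unfolding K_def by (meson max.coboundedI1 max.coboundedI2 order_trans)
  have K1: "1 \<le> K" unfolding K_def by simp
  have C: "coe \<alpha> \<beta> \<phi> \<psi> a b K"
    by (rule coe.intro[OF assms(1,2,3,4,5) fa fb hom ca ea' eb' Ka' Kb' K1])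
  obtain \<theta> \<epsilon> where th: "homeomorphic_map euclidean euclidean \<theta>" and eps: "\<epsilon> = 1 \<or> \<epsilon> = -1"
    and theq: "\<forall>n x. \<theta> (\<alpha> n x) = \<beta> (\<epsilon> * n) (\<theta> x)"
    using coe.conj_main[OF C] by blast
  obtain \<theta>' where th': "homeomorphic_maps euclidean euclidean \<theta> \<theta>'" using th homeomorphic_map_maps by blast
  have "homeomorphic_maps (prod_topology (discrete_topology (UNIV::bool set)) euclidean) (prod_topology (discrete_topology (UNIV::bool set)) euclidean)
          (\<lambda>(x, y). (id x, \<theta> y)) (\<lambda>(x, y). (id x, \<theta>' y))"
  proof -
    have hid: "homeomorphic_maps (discrete_topology (UNIV::bool set)) (discrete_topology UNIV) id id"
      by (simp only: homeomorphic_maps_id)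
    show ?thesis unfolding homeomorphic_maps_prod using th' hid by blast
  qed
  then have hm: "homeomorphic_map Xtop Xtop (\<lambda>(c, x). (c, \<theta> x))"
    unfolding Xtop_def homeomorphic_map_maps by (auto simp: id_def)
  define \<tau> where "\<tau> = (\<lambda>(n::int, e::bool). (\<epsilon> * n, e))"
  have ee: "\<epsilon> * \<epsilon> = 1" using eps by auto
  have tt: "\<tau> \<circ> \<tau> = id" unfolding \<tau>_def by (auto simp: ee mult.assoc[symmetric])
  have bij: "bij \<tau>" by (rule o_bij[OF tt tt])
  have homm: "\<tau> (dmult g h) = dmult (\<tau> g) (\<tau> h)" for g h
    unfolding \<tau>_def dmult_def by (cases g; cases h) (simp add: algebra_simps)
  have eq: "(\<lambda>(c, x). (c, \<theta> x)) (induced_action \<alpha> g z) = induced_action \<beta> (\<tau> g) ((\<lambda>(c, x). (c, \<theta> x)) z)" for g z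
  proof -
    obtain n e where g: "g = (n, e)" by fastforce
    obtain c x where z: "z = (c, x)" by fastforce
    show ?thesis unfolding g z \<tau>_def using theq by (simp add: ind_simp)
  qed
  show "conjugate_actions dmult Xtop (induced_action \<alpha>) (induced_action \<beta>)"
    unfolding conjugate_actions_def
    by (intro exI[of _ "\<lambda>(c, x). (c, \<theta> x)"] exI[of _ \<tau>] conjI hm bij allI impI homm eq)
qed

end
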